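(* Let $(S,+)$ be an infinite left weakly cancellative semigroup with no idempotent element, and let $A\subseteq S$ be an IP set. Then there is a family $\{A_\alpha:\alpha<2^\omega\}$ of subsets of $A$ such that each $A_\alpha$ is an infinite IP set and $A_\alpha\cap A_\beta$ is finite whenever $\alpha<\beta<2^\omega$.
   Context: $S$ is left weakly cancellative if for all $a,b\in S$ the set $\{x: a+x=b\}$ is finite; $e$ is idempotent if $e+e=e$. For a sequence $\langle x_n\rangle_{n=1}^\infty$ in $S$, $\mathrm{FS}(\langle x_n\rangle_{n=1}^\infty)$ is the set of all sums $\sum_{n\in H}x_n$ (in increasing order of indices) with $H$ a nonempty finite subset of $\mathbb{N}$. $A$ is an IP set if $\mathrm{FS}(\langle x_n\rangle_{n=1}^\infty)\subseteq A$ for some sequence $\langle x_n\rangle_{n=1}^\infty$ in $S$. *)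

theory Defs
  imports Main
begin

fun lsum :: "'a::semigroup_add list \<Rightarrow> 'a" where
  "lsum [] = undefined"
| "lsum [x] = x"
| "lsum (x # y # xs) = x + lsum (y # xs)"

definition fsum :: "(nat \<Rightarrow> 'a::semigroup_add) \<Rightarrow> nat set \<Rightarrow> 'a" where
  "fsum x H = lsum (map x (sorted_list_of_set H))"

definition FS :: "(nat \<Rightarrow> 'a::semigroup_add) \<Rightarrow> 'a set" where
  "FS x = {fsum x H | H. finite H \<and> H \<noteq> {}}"

definition IP_set :: "'a::semigroup_add set \<Rightarrow> bool" where
  "IP_set A \<longleftrightarrow> (\<exists>x. FS x \<subseteq> A)"

definition left_weakly_cancellative :: "'a::semigroup_add itself \<Rightarrow> bool" where
  "left_weakly_cancellative _ \<longleftrightarrow> (\<forall>a b :: 'a. finite {x. a + x = b})"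

end

theory Submission
  imports Defs "HOL-Library.Infinite_Set"
begin

lemma lsum_append:
  "xs \<noteq> [] \<Longrightarrow> ys \<noteq> [] \<Longrightarrow> lsum (xs @ ys) = lsum xs + lsum ys"
proof (induction xs rule: lsum.induct)
  case 1 then show ?case by simp
next
  case (2 x) then show ?case by (cases ys) auto
next
  case (3 x y xs) then show ?case by (simp add: add.assoc)
qed

lemma sorted_union:
  assumes "finite H" "finite K" "\<forall>h\<in>H. \<forall>k\<in>K. h < k"
  shows "sorted_list_of_set (H \<union> K) = sorted_list_of_set H @ sorted_list_of_set (K::nat set)"
proof (rule sorted_distinct_set_unique)
  show "sorted (sorted_list_of_set H @ sorted_list_of_set K)"
    using assms by (auto simp: sorted_append less_imp_le)
  show "distinct (sorted_list_of_set H @ sorted_list_of_set K)"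
    using assms by auto
qed (use assms in auto)

lemma fsum_union:
  assumes "finite H" "finite K" "H \<noteq> {}" "K \<noteq> {}" "\<forall>h\<in>H. \<forall>k\<in>K. h < k"
  shows "fsum z (H \<union> K) = fsum z H + fsum z K"
  using assms unfolding fsum_def
  by (simp add: sorted_union lsum_append)

lemma fsum_single [simp]: "fsum z {n} = z n"
  by (simp add: fsum_def)

lemma fsum_cong:
  assumes "finite K" "\<forall>i\<in>K. f i = g i"
  shows "fsum f K = fsum g K"
  using assms unfolding fsum_def by (metis map_eq_conv set_sorted_list_of_set)

lemma sorted_image_mono:
  assumes "strict_mono (g::nat \<Rightarrow> nat)" "finite K"
  shows "sorted_list_of_set (g ` K) = map g (sorted_list_of_set K)"
proof (rule sorted_distinct_set_unique)
  have "sorted (sorted_list_of_set K)" by simp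
  then show "sorted (map g (sorted_list_of_set K))"
    using assms(1) by (simp add: sorted_map strict_mono_less_eq)
  show "distinct (map g (sorted_list_of_set K))"
    using assms by (simp add: distinct_map strict_mono_imp_inj_on inj_on_subset)
qed (use assms in auto)

lemma fsum_image:
  assumes "strict_mono (g::nat \<Rightarrow> nat)" "finite K"
  shows "fsum z (g ` K) = fsum (z \<circ> g) K"
  using assms unfolding fsum_def by (simp add: sorted_image_mono)

definition prep :: "'a::semigroup_add \<Rightarrow> nat \<Rightarrow> 'a" where
  "prep v j = lsum (replicate (Suc j) v)"

lemma prep_add: "prep v (a + b + 1) = prep v a + prep v b"
proof -
  have "replicate (Suc (a + b + 1)) v = replicate (Suc a) v @ replicate (Suc b) v"
    using replicate_add[of "Suc a" "Suc b" v] by simp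
  then show ?thesis unfolding prep_def by (simp only:) (rule lsum_append; simp)
qed

lemma prep_idem:
  assumes noid: "\<forall>e :: 'a::semigroup_add. e + e \<noteq> e"
    and eq: "prep (v::'a) j = prep v j'" and lt: "j < j'"
  shows False
proof -
  define k where "k = j' - j"
  have k: "k \<ge> 1" "j' = j + k" using lt by (auto simp: k_def)
  have step: "prep v (j + t) = prep v (j + t + k)" for t
  proof (induction t)
    case 0 then show ?case using eq k by simp
  next
    case (Suc t)
    have "prep v (j + Suc t) = prep v (j + t) + prep v 0"
      using prep_add[of v "j+t" 0] by simp
    also have "\<dots> = prep v (j + t + k) + prep v 0" using Suc by simp
    also have "\<dots> = prep v (j + Suc t + k)"
      using prep_add[of v "j+t+k" 0] by simp
    finally show ?case .
  qed
  have per: "prep v (j + t) = prep v (j + t + q * k)" for t q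
  proof (induction q)
    case 0 then show ?case by simp
  next
    case (Suc q)
    have "prep v (j + t + q * k) = prep v (j + (t + q*k) + k)"
      using step[of "t + q*k"] by (simp add: add.assoc)
    then show ?case using Suc by (simp add: algebra_simps)
  qed
  define i where "i = (j + 1) * k - 1"
  have jk: "(j + 1) * 1 \<le> (j + 1) * k" using k(1) by (rule mult_le_mono2)
  have ij: "i \<ge> j" using jk unfolding i_def by simp
  have i1: "i + 1 = (j + 1) * k" using jk unfolding i_def by simp
  have "prep v i + prep v i = prep v (i + i + 1)" using prep_add[of v i i] by simp
  also have "\<dots> = prep v (j + (i - j) + (j+1) * k)" using ij i1 by (intro arg_cong[where f="prep v"]) linarith
  also have "\<dots> = prep v (j + (i - j))" using per[of "i - j" "j+1"] by simp
  also have "\<dots> = prep v i" using ij by simp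
  finally show False using noid by blast
qed

lemma avoid:
  assumes noid: "\<forall>e :: 'a::semigroup_add. e + e \<noteq> e"
    and fin: "finite Z"
  shows "\<exists>H. finite H \<and> H \<noteq> {} \<and> (\<forall>h\<in>H. m \<le> h) \<and> fsum (x :: nat \<Rightarrow> 'a) H \<notin> Z"
proof (rule ccontr)
  assume "\<not> ?thesis"
  then have all: "\<And>H. finite H \<Longrightarrow> H \<noteq> {} \<Longrightarrow> (\<forall>h\<in>H. m \<le> h) \<Longrightarrow> fsum x H \<in> Z"
    by blast
  have "x n \<in> Z" if "m \<le> n" for n using all[of "{n}"] that by simp
  then have "x ` {m..} \<subseteq> Z" by auto
  then have "finite (x ` {m..})" using fin finite_subset by blast
  moreover have "infinite {m::nat..}" by (rule infinite_Ici)
  ultimately obtain n0 where "n0 \<in> {m..}" and inf: "infinite {n\<in>{m..}. x n = x n0}"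
    using pigeonhole_infinite by blast
  define S where "S = {n\<in>{m..}. x n = x n0}"
  define g where "g = enumerate S"
  have inf': "infinite S" using inf S_def by simp
  have sm: "strict_mono g" unfolding g_def using inf' by (simp add: strict_mono_enumerate)
  have gS: "g i \<in> S" for i unfolding g_def using inf' by (simp add: enumerate_in_set)
  have pZ: "prep (x n0) j \<in> Z" for j
  proof -
    have "fsum x (g ` {0..<Suc j}) = fsum (x \<circ> g) {0..<Suc j}"
      by (rule fsum_image[OF sm]) simp
    also have "\<dots> = lsum (map (x \<circ> g) [0..<Suc j])" by (simp add: fsum_def)
    also have "map (x \<circ> g) [0..<Suc j] = replicate (Suc j) (x n0)"
    proof -
      have "map (x \<circ> g) [0..<Suc j] = map (\<lambda>_. x n0) [0..<Suc j]"
        using gS unfolding S_def by (intro map_cong) auto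
      then show ?thesis by (simp add: map_replicate_const)
    qed
    finally have "fsum x (g ` {0..<Suc j}) = prep (x n0) j" by (simp add: prep_def)
    moreover have "fsum x (g ` {0..<Suc j}) \<in> Z"
      apply (rule all) using gS unfolding S_def by auto
    ultimately show ?thesis by simp
  qed
  then have "range (prep (x n0)) \<subseteq> Z" by auto
  then have "finite (range (prep (x n0)))" using fin finite_subset by blast
  then have "\<not> inj (prep (x n0))" using finite_imageD by blast
  then obtain j j' where "j \<noteq> j'" "prep (x n0) j = prep (x n0) j'"
    unfolding inj_def by blast
  then show False using prep_idem[OF noid] by (metis linorder_neqE_nat)
qed


lemma FS_infinite:
  assumes noid: "\<forall>e :: 'a::semigroup_add. e + e \<noteq> e"
  shows "infinite (FS (z :: nat \<Rightarrow> 'a))"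
proof
  assume "finite (FS z)"
  from avoid[OF noid this, of 0 z] obtain H where
    "finite H" "H \<noteq> {}" "fsum z H \<notin> FS z" by blast
  then show False unfolding FS_def by blast
qed

definition Zf :: "(nat \<Rightarrow> 'a::semigroup_add) \<Rightarrow> nat \<Rightarrow> (nat \<Rightarrow> nat set) \<Rightarrow> 'a set" where
  "Zf x n g = (let P = (\<lambda>K. fsum (\<lambda>i. fsum x (g i)) K) ` {K. K \<subseteq> {..<n} \<and> K \<noteq> {}}
     in P \<union> (\<Union>s\<in>P. \<Union>s'\<in>P. {t. s + t = s'}))"

definition bnd :: "nat \<Rightarrow> (nat \<Rightarrow> nat set) \<Rightarrow> nat" where
  "bnd n g = Max (insert 0 (\<Union>i\<in>{..<n}. g i))"

definition chooseH :: "(nat \<Rightarrow> 'a::semigroup_add) \<Rightarrow> nat \<Rightarrow> (nat \<Rightarrow> nat set) \<Rightarrow> nat set" where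
  "chooseH x n g = (SOME H. finite H \<and> H \<noteq> {} \<and> (\<forall>h\<in>H. bnd n g < h) \<and> fsum x H \<notin> Zf x n g)"

primrec Gs :: "(nat \<Rightarrow> 'a::semigroup_add) \<Rightarrow> nat \<Rightarrow> nat \<Rightarrow> nat set" where
  "Gs x 0 = (\<lambda>_. {})"
| "Gs x (Suc n) = (Gs x n)(n := chooseH x n (Gs x n))"

definition Hs :: "(nat \<Rightarrow> 'a::semigroup_add) \<Rightarrow> nat \<Rightarrow> nat set" where
  "Hs x n = chooseH x n (Gs x n)"

lemma Gs_Hs: "i < n \<Longrightarrow> Gs x n i = Hs x i"
  by (induction n) (auto simp: Hs_def less_Suc_eq)

lemma Zf_fin:
  assumes lwc: "left_weakly_cancellative TYPE('a::semigroup_add)"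
  shows "finite (Zf (x :: nat \<Rightarrow> 'a) n g)"
proof -
  define P where "P = (\<lambda>K. fsum (\<lambda>i. fsum x (g i)) K) ` {K. K \<subseteq> {..<n} \<and> K \<noteq> {}}"
  have "{K. K \<subseteq> {..<n} \<and> K \<noteq> {}} \<subseteq> Pow {..<n}" by auto
  then have "finite {K. K \<subseteq> {..<n} \<and> K \<noteq> {}}" by (rule finite_subset) simp
  then have fP: "finite P" unfolding P_def by (rule finite_imageI)
  have "finite {t. s + t = s'}" for s s' :: 'a
    using lwc unfolding left_weakly_cancellative_def by blast
  then have "finite (P \<union> (\<Union>s\<in>P. \<Union>s'\<in>P. {t. s + t = s'}))" using fP by auto
  then show ?thesis unfolding Zf_def P_def Let_def .
qed

lemma Hs_prop:
  assumes noid: "\<forall>e :: 'a::semigroup_add. e + e \<noteq> e"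
    and lwc: "left_weakly_cancellative TYPE('a::semigroup_add)"
  shows "finite (Hs x n) \<and> Hs x n \<noteq> {} \<and> (\<forall>h\<in>Hs x n. bnd n (Gs x n) < h)
     \<and> fsum (x :: nat \<Rightarrow> 'a) (Hs x n) \<notin> Zf x n (Gs x n)"
proof -
  from avoid[OF noid Zf_fin[OF lwc, of x n "Gs x n"], where m="Suc (bnd n (Gs x n))" and x=x]
  obtain H where "finite H" "H \<noteq> {}" "\<forall>h\<in>H. Suc (bnd n (Gs x n)) \<le> h" "fsum x H \<notin> Zf x n (Gs x n)"
    by blast
  then have "\<exists>H. finite H \<and> H \<noteq> {} \<and> (\<forall>h\<in>H. bnd n (Gs x n) < h) \<and> fsum x H \<notin> Zf x n (Gs x n)"
    by (intro exI[of _ H]) (auto simp: Suc_le_eq)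
  then show ?thesis unfolding Hs_def chooseH_def by (rule someI_ex)
qed

lemma Zf_cong: "Zf x n (Gs x n) = Zf x n (Hs x)"
proof -
  have "(\<lambda>K. fsum (\<lambda>i. fsum x (Gs x n i)) K) ` {K. K \<subseteq> {..<n} \<and> K \<noteq> {}}
      = (\<lambda>K. fsum (\<lambda>i. fsum x (Hs x i)) K) ` {K. K \<subseteq> {..<n} \<and> K \<noteq> {}}"
  proof (rule image_cong[OF refl])
    fix K assume "K \<in> {K. K \<subseteq> {..<n} \<and> K \<noteq> {}}"
    then have "K \<subseteq> {..<n}" by auto
    then show "fsum (\<lambda>i. fsum x (Gs x n i)) K = fsum (\<lambda>i. fsum x (Hs x i)) K"
      by (intro fsum_cong) (auto intro: finite_subset simp: Gs_Hs)
  qed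
  then show ?thesis unfolding Zf_def by simp
qed

lemma Hs_order:
  assumes noid: "\<forall>e :: 'a::semigroup_add. e + e \<noteq> e"
    and lwc: "left_weakly_cancellative TYPE('a::semigroup_add)"
    and ij: "i < j" and a: "a \<in> Hs (x :: nat \<Rightarrow> 'a) i" and b: "b \<in> Hs x j"
  shows "a < b"
proof -
  have fin: "finite (\<Union>i'\<in>{..<j}. Gs x j i')"
    using Hs_prop[OF noid lwc] by (simp add: Gs_Hs)
  have "a \<in> (\<Union>i'\<in>{..<j}. Gs x j i')" using ij a by (auto simp: Gs_Hs)
  then have "a \<le> bnd j (Gs x j)" unfolding bnd_def using fin by (simp add: Max_ge_iff)
  also have "\<dots> < b" using Hs_prop[OF noid lwc, of x j] b by blast
  finally show ?thesis .
qed

lemma y_union: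
  assumes noid: "\<forall>e :: 'a::semigroup_add. e + e \<noteq> e"
    and lwc: "left_weakly_cancellative TYPE('a::semigroup_add)"
  shows "finite K \<Longrightarrow> K \<noteq> {} \<Longrightarrow>
    fsum (\<lambda>i. fsum (x :: nat \<Rightarrow> 'a) (Hs x i)) K = fsum x (\<Union>i\<in>K. Hs x i)"
proof (induction "card K" arbitrary: K rule: less_induct)
  case less
  define a where "a = Min K"
  have aK: "a \<in> K" using less.prems a_def by simp
  show ?case
  proof (cases "K = {a}")
    case True then show ?thesis by simp
  next
    case False
    define K' where "K' = K - {a}"
    have fK': "finite K'" using less.prems K'_def by simp
    have neK': "K' \<noteq> {}" using False aK K'_def by blast
    have cK': "card K' < card K" unfolding K'_def using less.prems(1) aK by (rule card_Diff1_less)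
    note K' = fK' neK' cK'
    have Keq: "K = {a} \<union> K'" using aK unfolding K'_def by blast
    have alt: "\<forall>k\<in>K'. a < k"
    proof
      fix k assume "k \<in> K'"
      then have "k \<in> K" "k \<noteq> a" unfolding K'_def by auto
      moreover have "a \<le> k" unfolding a_def using less.prems(1) \<open>k \<in> K\<close> by (rule Min_le)
      ultimately show "a < k" by simp
    qed
    have "fsum (\<lambda>i. fsum x (Hs x i)) K = fsum x (Hs x a) + fsum (\<lambda>i. fsum x (Hs x i)) K'"
      using fsum_union[of "{a}" K' "\<lambda>i. fsum x (Hs x i)"] K' alt Keq by simp
    also have "\<dots> = fsum x (Hs x a) + fsum x (\<Union>i\<in>K'. Hs x i)"
      using less.hyps K' by simp
    also have "\<dots> = fsum x (Hs x a \<union> (\<Union>i\<in>K'. Hs x i))"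
    proof (rule fsum_union[symmetric])
      show "finite (Hs x a)" "Hs x a \<noteq> {}" using Hs_prop[OF noid lwc] by auto
      show "finite (\<Union>i\<in>K'. Hs x i)" using Hs_prop[OF noid lwc] K' by auto
      show "(\<Union>i\<in>K'. Hs x i) \<noteq> {}" using Hs_prop[OF noid lwc] K' by auto
      show "\<forall>h\<in>Hs x a. \<forall>k\<in>\<Union>i\<in>K'. Hs x i. h < k"
        using Hs_order[OF noid lwc] alt by blast
    qed
    also have "Hs x a \<union> (\<Union>i\<in>K'. Hs x i) = (\<Union>i\<in>K. Hs x i)" using Keq by auto
    finally show ?thesis .
  qed
qed

lemma FS_y:
  assumes noid: "\<forall>e :: 'a::semigroup_add. e + e \<noteq> e"
    and lwc: "left_weakly_cancellative TYPE('a::semigroup_add)"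
  shows "FS (\<lambda>i. fsum (x :: nat \<Rightarrow> 'a) (Hs x i)) \<subseteq> FS x"
proof
  fix t assume "t \<in> FS (\<lambda>i. fsum x (Hs x i))"
  then obtain K where K: "finite K" "K \<noteq> {}" "t = fsum (\<lambda>i. fsum x (Hs x i)) K"
    unfolding FS_def by blast
  then have "t = fsum x (\<Union>i\<in>K. Hs x i)" using y_union[OF noid lwc] by simp
  moreover have "finite (\<Union>i\<in>K. Hs x i)" "(\<Union>i\<in>K. Hs x i) \<noteq> {}"
    using K Hs_prop[OF noid lwc] by auto
  ultimately show "t \<in> FS x" unfolding FS_def by blast
qed

lemma maxuniq:
  assumes noid: "\<forall>e :: 'a::semigroup_add. e + e \<noteq> e"
    and lwc: "left_weakly_cancellative TYPE('a::semigroup_add)"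
    and H: "finite H" "H \<noteq> {}" and K: "finite K" "K \<noteq> {}" and lt: "Max K < Max H"
  shows "fsum (\<lambda>i. fsum (x :: nat \<Rightarrow> 'a) (Hs x i)) H \<noteq> fsum (\<lambda>i. fsum x (Hs x i)) K"
proof
  define y where "y = (\<lambda>i. fsum x (Hs x i))"
  define n where "n = Max H"
  define P where "P = (\<lambda>K. fsum y K) ` {K. K \<subseteq> {..<n} \<and> K \<noteq> {}}"
  assume eq: "fsum (\<lambda>i. fsum x (Hs x i)) H = fsum (\<lambda>i. fsum x (Hs x i)) K"
  have z: "fsum x (Hs x n) \<notin> Zf x n (Hs x)"
    using Hs_prop[OF noid lwc, of x n] Zf_cong[of x n] by simp
  have yn: "y n \<notin> P \<union> (\<Union>s\<in>P. \<Union>s'\<in>P. {t. s + t = s'})"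
    using z unfolding Zf_def Let_def P_def y_def by blast
  have "K \<subseteq> {..<n}" using lt K n_def by auto
  then have KP: "fsum y K \<in> P" unfolding P_def using K by blast
  have nH: "n \<in> H" using H n_def by simp
  show False
  proof (cases "H = {n}")
    case True
    then show False using eq KP yn unfolding y_def by simp
  next
    case False
    define H' where "H' = H - {n}"
    have H'1: "finite H'" using H H'_def by simp
    have H'2: "H' \<noteq> {}" using False nH H'_def by blast
    have H'3: "H' \<subseteq> {..<n}"
    proof
      fix h assume h: "h \<in> H'"
      then have "h \<le> n" "h \<noteq> n" using H unfolding H'_def n_def by auto
      then show "h \<in> {..<n}" by simp
    qed
    note H' = H'1 H'2 H'3
    have HH: "H = H' \<union> {n}" using nH unfolding H'_def by blast
    have "fsum y H = fsum y (H' \<union> {n})" using HH by (rule arg_cong)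
    also have "\<dots> = fsum y H' + y n" using fsum_union[of H' "{n}" y] H' by auto
    finally have "fsum y H' + y n = fsum y K" using eq y_def by simp
    moreover have "fsum y H' \<in> P" unfolding P_def using H' by blast
    ultimately show False using yn KP by blast
  qed
qed

fun enc :: "bool list \<Rightarrow> nat" where
  "enc [] = 0"
| "enc (b # bs) = (if b then 1 else 0) + 2 * enc bs"

lemma enc_lt: "enc bs < 2 ^ length bs"
  by (induction bs) auto

lemma enc_inj: "length bs = length cs \<Longrightarrow> enc bs = enc cs \<Longrightarrow> bs = cs"
proof (induction bs arbitrary: cs)
  case Nil then show ?case by simp
next
  case (Cons a bs)
  then obtain c cs' where cs: "cs = c # cs'" by (cases cs) auto
  have e: "(if a then 1 else 0) + 2 * enc bs = (if c then 1 else 0) + 2 * enc cs'"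
    using Cons.prems cs by simp
  define ba where "ba = (if a then 1 else 0::nat)"
  define bc where "bc = (if c then 1 else 0::nat)"
  have "ba < 2" "bc < 2" unfolding ba_def bc_def by auto
  then have "ba = bc" using e unfolding ba_def[symmetric] bc_def[symmetric] by presburger
  then have "a = c" unfolding ba_def bc_def by (auto split: if_splits)
  moreover have "enc bs = enc cs'" using e calculation by (cases a) auto
  ultimately show ?case using Cons cs by simp
qed

definition code :: "nat set \<Rightarrow> nat \<Rightarrow> nat" where
  "code \<alpha> n = 2 ^ n + enc (map (\<lambda>i. i \<in> \<alpha>) [0..<n])"

lemma code_bounds: "2 ^ n \<le> code \<alpha> n" "code \<alpha> n < 2 ^ Suc n"
  using enc_lt[of "map (\<lambda>i. i \<in> \<alpha>) [0..<n]"] unfolding code_def by auto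

lemma code_sm: "strict_mono (code \<alpha>)"
  unfolding strict_mono_Suc_iff using code_bounds less_le_trans by blast

lemma code_eq_len:
  assumes "code \<alpha> n = code \<beta> m" shows "n = m"
proof (rule ccontr)
  have *: False if "code \<alpha> n = code \<beta> m" "n < m" for \<alpha> \<beta> n m
  proof -
    have "code \<alpha> n < 2 ^ Suc n" by (rule code_bounds)
    also have "\<dots> \<le> 2 ^ m" using that(2) by (intro power_increasing) auto
    also have "\<dots> \<le> code \<beta> m" by (rule code_bounds)
    finally show False using that(1) by simp
  qed
  assume "n \<noteq> m"
  then show False using *[OF assms] *[OF assms[symmetric]] by (meson linorder_neqE_nat)
qed

lemma code_eq:
  assumes "code \<alpha> n = code \<beta> m" shows "n = m \<and> (\<forall>i<n. (i \<in> \<alpha>) = (i \<in> \<beta>))"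
proof -
  have nm: "n = m" by (rule code_eq_len[OF assms])
  then have "enc (map (\<lambda>i. i \<in> \<alpha>) [0..<n]) = enc (map (\<lambda>i. i \<in> \<beta>) [0..<n])"
    using assms unfolding code_def by simp
  then have "map (\<lambda>i. i \<in> \<alpha>) [0..<n] = map (\<lambda>i. i \<in> \<beta>) [0..<n]"
    by (rule enc_inj[rotated]) simp
  then have "\<forall>i<n. (i \<in> \<alpha>) = (i \<in> \<beta>)"
  proof (intro allI impI)
    fix i assume "map (\<lambda>i. i \<in> \<alpha>) [0..<n] = map (\<lambda>i. i \<in> \<beta>) [0..<n]" "i < n"
    then show "(i \<in> \<alpha>) = (i \<in> \<beta>)" using arg_cong[of _ _ "\<lambda>l. l ! i"] by fastforce
  qed
  then show ?thesis using nm by simp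
qed

theorem theorem2p5:
  fixes A :: "'a::semigroup_add set"
  assumes "infinite (UNIV :: 'a set)"
    and "left_weakly_cancellative TYPE('a)"
    and "\<forall>e :: 'a. e + e \<noteq> e"
    and "A \<subseteq> UNIV" and "IP_set A"
  shows "\<exists>F :: nat set \<Rightarrow> 'a set.
           (\<forall>\<alpha>. F \<alpha> \<subseteq> A \<and> infinite (F \<alpha>) \<and> IP_set (F \<alpha>)) \<and>
           (\<forall>\<alpha> \<beta>. \<alpha> \<noteq> \<beta> \<longrightarrow> finite (F \<alpha> \<inter> F \<beta>))"
proof -
  note noid = assms(3) and lwc = assms(2)
  obtain x where FSx: "FS x \<subseteq> A" using assms(5) unfolding IP_set_def by blast
  define y where "y = (\<lambda>i. fsum x (Hs x i))"
  define F where "F = (\<lambda>\<alpha>. FS (y \<circ> code \<alpha>))"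
  have sub: "FS (y \<circ> code \<alpha>) \<subseteq> FS y" for \<alpha>
  proof
    fix t assume "t \<in> FS (y \<circ> code \<alpha>)"
    then obtain K where K: "finite K" "K \<noteq> {}" "t = fsum (y \<circ> code \<alpha>) K"
      unfolding FS_def by blast
    then have "t = fsum y (code \<alpha> ` K)" using K by (simp add: fsum_image[OF code_sm])
    then show "t \<in> FS y" unfolding FS_def using K by blast
  qed
  have P1: "F \<alpha> \<subseteq> A \<and> infinite (F \<alpha>) \<and> IP_set (F \<alpha>)" for \<alpha>
  proof (intro conjI)
    have "FS y \<subseteq> FS x" unfolding y_def by (rule FS_y[OF noid lwc])
    then show "F \<alpha> \<subseteq> A" unfolding F_def using sub[of \<alpha>] FSx by blast
    show "infinite (F \<alpha>)" unfolding F_def by (rule FS_infinite[OF noid])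
    show "IP_set (F \<alpha>)" unfolding F_def IP_set_def by blast
  qed
  have P2: "finite (F \<alpha> \<inter> F \<beta>)" if ab: "\<alpha> \<noteq> \<beta>" for \<alpha> \<beta>
  proof -
    obtain d where d: "(d \<in> \<alpha>) \<noteq> (d \<in> \<beta>)" using ab by blast
    have "F \<alpha> \<inter> F \<beta> \<subseteq> (\<lambda>K. fsum (y \<circ> code \<alpha>) K) ` Pow {..d}"
    proof
      fix t assume "t \<in> F \<alpha> \<inter> F \<beta>"
      then obtain K K' where K: "finite K" "K \<noteq> {}" "t = fsum (y \<circ> code \<alpha>) K"
        and K': "finite K'" "K' \<noteq> {}" "t = fsum (y \<circ> code \<beta>) K'"
        unfolding F_def FS_def by blast
      have e: "fsum y (code \<alpha> ` K) = fsum y (code \<beta> ` K')"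
        using K K' by (simp add: fsum_image[OF code_sm])
      have m1: "Max (code \<alpha> ` K) = code \<alpha> (Max K)"
        using K by (simp add: mono_Max_commute strict_mono_mono[OF code_sm])
      have m2: "Max (code \<beta> ` K') = code \<beta> (Max K')"
        using K' by (simp add: mono_Max_commute strict_mono_mono[OF code_sm])
      have "\<not> Max (code \<alpha> ` K) < Max (code \<beta> ` K')"
        using maxuniq[OF noid lwc, of "code \<beta> ` K'" "code \<alpha> ` K" x] e K K' unfolding y_def by auto
      moreover have "\<not> Max (code \<beta> ` K') < Max (code \<alpha> ` K)"
        using maxuniq[OF noid lwc, of "code \<alpha> ` K" "code \<beta> ` K'" x] e K K' unfolding y_def by auto
      ultimately have "code \<alpha> (Max K) = code \<beta> (Max K')" using m1 m2 by simp
      from code_eq[OF this] have "Max K \<le> d" using d by (meson not_le)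
      then have "K \<subseteq> {..d}" using K by auto
      then show "t \<in> (\<lambda>K. fsum (y \<circ> code \<alpha>) K) ` Pow {..d}" using K by blast
    qed
    moreover have "finite ((\<lambda>K. fsum (y \<circ> code \<alpha>) K) ` Pow {..d})" by simp
    ultimately show ?thesis by (rule finite_subset)
  qed
  show ?thesis using P1 P2 by blast
qed

end
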